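(* Let $S$ be a set and $s,s':I_m\to S$ be mirrored, and assume $(m_1,m_2)$ is a coincidence of $(s,s')$, with $m'=m_1+m_2<m$. Define $s_0,s_0':I_{m-m'}\to S$ by $s_0(j)=s(j+m_1)$ and $s_0'(j)=s'(j+m_1)$ (the restrictions of $s,s'$ to $I_m'=\{m_1+1,\ldots,m-m_2\}$, reindexed). Then $s_0$ and $s_0'$ are mirrored (as sequences of length $m-m'$).
   Context: $\mathcal{S}_k$ is the group of bijections of $I_k=\{1,\ldots,k\}$, with $\sigma\circ\tau$ meaning apply $\tau$ first. $\mathscr{T}_k=\{\sigma\in\mathcal{S}_k \mid \exists t:\ \sigma(1)>\cdots>\sigma(t)=1,\ \sigma(t)<\sigma(t+1)<\cdots<\sigma(k)\}$. $\mathcal{S}_k$ acts on sequences $s:I_k\to S$ by $\sigma s=s\circ\sigma^{-1}$. Two sequences $s,s':I_k\to S$ are mirrored if for every $\sigma\in\mathscr{T}_k$ there is $\sigma'\in\mathscr{T}_k$ with $\sigma s=\sigma's'$, and for every $\tau'\in\mathscr{T}_k$ there is $\tau\in\mathscr{T}_k$ with $\tau's'=\tau s$. For $s,s':I_m\to S$ and $A=s(1)$, a coincidence of $(s,s')$ is a pair $(m_1,m_2)$ of integers with $m_1>0$, $m_2\ge 0$, $m_1+m_2<m$, such that $s(i)=s'(i)=A$ for all $i\in\{1,\ldots,m_1\}\cup\{m-m_2+1,\ldots,m\}$, and $s(m_1+1)\ne A$, $s'(m_1+1)\ne A$, $s(m-m_2)\ne A$, $s'(m-m_2)\ne A$. 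*)

theory Defs
  imports "HOL-Combinatorics.Permutations"
begin

text \<open>Sequences s : I_k -> S are modelled as functions nat => 'a, only their values
on I_k = {1..k} being relevant.  Permutations of I_k are functions permuting {1..k}.\<close>

definition Ik :: "nat \<Rightarrow> nat set" where
  "Ik k = {1..k}"

definition Tk :: "nat \<Rightarrow> (nat \<Rightarrow> nat) set" where
  "Tk k = {\<sigma>. \<sigma> permutes Ik k \<and>
     (\<exists>t\<in>Ik k. \<sigma> t = 1 \<and>
        (\<forall>i j. 1 \<le> i \<and> i < j \<and> j \<le> t \<longrightarrow> \<sigma> i > \<sigma> j) \<and>
        (\<forall>i j. t \<le> i \<and> i < j \<and> j \<le> k \<longrightarrow> \<sigma> i < \<sigma> j))}"

definition act :: "(nat \<Rightarrow> nat) \<Rightarrow> (nat \<Rightarrow> 'a) \<Rightarrow> (nat \<Rightarrow> 'a)" where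
  "act \<sigma> s = s \<circ> inv \<sigma>"

definition seq_eq :: "nat \<Rightarrow> (nat \<Rightarrow> 'a) \<Rightarrow> (nat \<Rightarrow> 'a) \<Rightarrow> bool" where
  "seq_eq k s s' \<longleftrightarrow> (\<forall>i\<in>Ik k. s i = s' i)"

definition mirrored :: "nat \<Rightarrow> (nat \<Rightarrow> 'a) \<Rightarrow> (nat \<Rightarrow> 'a) \<Rightarrow> bool" where
  "mirrored k s s' \<longleftrightarrow>
     (\<forall>\<sigma>\<in>Tk k. \<exists>\<sigma>'\<in>Tk k. seq_eq k (act \<sigma> s) (act \<sigma>' s')) \<and>
     (\<forall>\<tau>'\<in>Tk k. \<exists>\<tau>\<in>Tk k. seq_eq k (act \<tau>' s') (act \<tau> s))"

definition coincidence :: "nat \<Rightarrow> (nat \<Rightarrow> 'a) \<Rightarrow> (nat \<Rightarrow> 'a) \<Rightarrow> nat \<Rightarrow> nat \<Rightarrow> bool" where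
  "coincidence m s s' m1 m2 \<longleftrightarrow>
     (let A = s 1 in
       m1 > 0 \<and> m1 + m2 < m \<and>
       (\<forall>i\<in>{1..m1} \<union> {m - m2 + 1..m}. s i = A \<and> s' i = A) \<and>
       s (m1 + 1) \<noteq> A \<and> s' (m1 + 1) \<noteq> A \<and> s (m - m2) \<noteq> A \<and> s' (m - m2) \<noteq> A)"

end

theory Submission
imports Defs
begin

lemma endo_permutes:
  assumes "finite S" "f ` S \<subseteq> S" "inj_on f S" "\<And>x. x \<notin> S \<Longrightarrow> f x = x"
  shows "f permutes S"
  apply (rule bij_imp_permutes)
  using assms endo_inj_surj[OF assms(1-3)] by (auto simp: bij_betw_def)

lemma seq_eq_act:
  assumes "\<sigma> permutes Ik k" "\<tau> permutes Ik k"
  shows "seq_eq k (act \<sigma> s) (act \<tau> s') \<longleftrightarrow> (\<forall>i\<in>Ik k. \<forall>j\<in>Ik k. \<sigma> i = \<tau> j \<longrightarrow> s i = s' j)"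
proof
  assume H: "seq_eq k (act \<sigma> s) (act \<tau> s')"
  show "\<forall>i\<in>Ik k. \<forall>j\<in>Ik k. \<sigma> i = \<tau> j \<longrightarrow> s i = s' j"
  proof (intro ballI impI)
    fix i j assume i: "i \<in> Ik k" and j: "j \<in> Ik k" and e: "\<sigma> i = \<tau> j"
    have p: "\<sigma> i \<in> Ik k" using i assms(1) by (simp add: permutes_in_image)
    have "s (inv \<sigma> (\<sigma> i)) = s' (inv \<tau> (\<sigma> i))" using H p by (simp add: seq_eq_def act_def)
    then show "s i = s' j" using e permutes_inverses(2)[OF assms(1)] permutes_inverses(2)[OF assms(2)] by metis
  qed
next
  assume H: "\<forall>i\<in>Ik k. \<forall>j\<in>Ik k. \<sigma> i = \<tau> j \<longrightarrow> s i = s' j"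
  show "seq_eq k (act \<sigma> s) (act \<tau> s')"
    unfolding seq_eq_def act_def
  proof
    fix p assume p: "p \<in> Ik k"
    have "inv \<sigma> p \<in> Ik k" "inv \<tau> p \<in> Ik k"
      using p permutes_inv[OF assms(1)] permutes_inv[OF assms(2)] by (simp_all add: permutes_in_image)
    moreover have "\<sigma> (inv \<sigma> p) = \<tau> (inv \<tau> p)"
      using permutes_inverses(1)[OF assms(1)] permutes_inverses(1)[OF assms(2)] by simp
    ultimately show "(s \<circ> inv \<sigma>) p = (s' \<circ> inv \<tau>) p" using H by simp
  qed
qed

lemma V_max:
  assumes "\<tau> \<in> Tk k" "1 \<le> a" "a \<le> j" "j \<le> b" "b \<le> k"
  shows "\<tau> j \<le> max (\<tau> a) (\<tau> b)"
proof -
  obtain t where dec: "\<forall>i j. 1 \<le> i \<and> i < j \<and> j \<le> t \<longrightarrow> \<tau> i > \<tau> j"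
    and inc: "\<forall>i j. t \<le> i \<and> i < j \<and> j \<le> k \<longrightarrow> \<tau> i < \<tau> j"
    using assms(1) unfolding Tk_def by auto
  show ?thesis
  proof (cases "j \<le> t")
    case True
    then show ?thesis using dec assms by (cases "a = j") (auto, metis le_neq_implies_less less_imp_le max.coboundedI1)
  next
    case False
    then show ?thesis using inc assms by (cases "b = j") (auto, metis le_neq_implies_less less_imp_le max.coboundedI2 nat_le_linear)
  qed
qed

definition extp :: "nat \<Rightarrow> nat \<Rightarrow> nat \<Rightarrow> (nat\<Rightarrow>nat) \<Rightarrow> nat \<Rightarrow> nat" where
"extp m m1 m2 \<sigma> i = (if 1 \<le> i \<and> i \<le> m1 then m+1-i else if m1 < i \<and> i \<le> m - m2 then \<sigma>(i - m1)
   else if m - m2 < i \<and> i \<le> m then (m - (m1+m2)) + (i - (m - m2)) else i)"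

lemma extp_Tk:
  assumes s: "\<sigma> \<in> Tk (m - (m1+m2))" and mm: "m1 + m2 < m"
  shows "extp m m1 m2 \<sigma> \<in> Tk m"
proof -
  let ?k = "m - (m1+m2)"
  let ?e = "extp m m1 m2 \<sigma>"
  have perm: "\<sigma> permutes {1..?k}" using s unfolding Tk_def Ik_def by auto
  obtain t where t: "1 \<le> t" "t \<le> ?k" "\<sigma> t = 1" and dec: "\<forall>i j. 1 \<le> i \<and> i < j \<and> j \<le> t \<longrightarrow> \<sigma> i > \<sigma> j"
    and inc: "\<forall>i j. t \<le> i \<and> i < j \<and> j \<le> ?k \<longrightarrow> \<sigma> i < \<sigma> j"
    using s unfolding Tk_def Ik_def by auto
  have rng: "\<And>i. 1 \<le> i \<Longrightarrow> i \<le> ?k \<Longrightarrow> 1 \<le> \<sigma> i \<and> \<sigma> i \<le> ?k"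
    using permutes_in_image[OF perm] by auto
  have inj: "inj \<sigma>" using permutes_inj[OF perm] .
  have rng2: "\<And>i. m1 < i \<Longrightarrow> i \<le> m - m2 \<Longrightarrow> 1 \<le> \<sigma> (i - m1) \<and> \<sigma> (i - m1) \<le> ?k"
  proof -
    fix i assume a: "m1 < i" "i \<le> m - m2"
    have "1 \<le> i - m1" "i - m1 \<le> ?k" using a mm by linarith+
    then show "1 \<le> \<sigma> (i - m1) \<and> \<sigma> (i - m1) \<le> ?k" using rng by blast
  qed
  have dec2: "\<And>i j. m1 < i \<Longrightarrow> i < j \<Longrightarrow> j \<le> t + m1 \<Longrightarrow> \<sigma>(j-m1) < \<sigma>(i-m1)"
  proof -
    fix i j assume a: "m1 < (i::nat)" "i < j" "j \<le> t + m1"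
    have "1 \<le> i - m1 \<and> i - m1 < j - m1 \<and> j - m1 \<le> t" using a by linarith
    then show "\<sigma>(j-m1) < \<sigma>(i-m1)" using dec by blast
  qed
  have inc2: "\<And>i j. t + m1 \<le> i \<Longrightarrow> i < j \<Longrightarrow> j \<le> m - m2 \<Longrightarrow> \<sigma>(i-m1) < \<sigma>(j-m1)"
  proof -
    fix i j assume a: "t + m1 \<le> (i::nat)" "i < j" "j \<le> m - m2"
    have "t \<le> i - m1 \<and> i - m1 < j - m1 \<and> j - m1 \<le> ?k" using a mm by linarith
    then show "\<sigma>(i-m1) < \<sigma>(j-m1)" using inc by blast
  qed
  have img: "?e ` {1..m} \<subseteq> {1..m}"
  proof
    fix y assume "y \<in> ?e ` {1..m}"
    then obtain i where i: "i \<in> {1..m}" "y = ?e i" by auto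
    show "y \<in> {1..m}" using i rng2[of i] mm unfolding extp_def by auto
  qed
  have ij: "inj_on ?e {1..m}"
  proof (rule inj_onI)
    fix i j assume i: "i \<in> {1..m}" and j: "j \<in> {1..m}" and e: "?e i = ?e j"
    show "i = j"
      using i j e rng2[of i] rng2[of j] mm inj_eq[OF inj, of "i - m1" "j - m1"]
      unfolding extp_def by (auto split: if_splits)
  qed
  have p: "?e permutes Ik m" unfolding Ik_def
    by (rule endo_permutes[OF _ img ij]) (use mm in \<open>auto simp: extp_def\<close>)
  show ?thesis unfolding Tk_def
  proof (intro CollectI conjI p bexI[of _ "t + m1"])
    show "t + m1 \<in> Ik m" using t mm by (auto simp: Ik_def)
    show "?e (t + m1) = 1" using t mm by (auto simp: extp_def)
    show "\<forall>i j. 1 \<le> i \<and> i < j \<and> j \<le> t + m1 \<longrightarrow> ?e j < ?e i"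
    proof (intro allI impI)
      fix i j assume a: "1 \<le> i \<and> i < j \<and> j \<le> t + m1"
      show "?e j < ?e i"
        using a t mm rng2[of i] rng2[of j] dec2[of i j]
        unfolding extp_def by auto
    qed
    show "\<forall>i j. t + m1 \<le> i \<and> i < j \<and> j \<le> m \<longrightarrow> ?e i < ?e j"
    proof (intro allI impI)
      fix i j assume a: "t + m1 \<le> i \<and> i < j \<and> j \<le> m"
      show "?e i < ?e j"
        using a t mm rng2[of i] rng2[of j] inc2[of i j]
        unfolding extp_def by auto
    qed
  qed
qed

lemma restr_Tk:
  assumes T: "\<tau> \<in> Tk m" and mm: "m1 + m2 < m"
    and b1: "\<tau> (m1+1) \<le> m - (m1+m2)" and b2: "\<tau> (m - m2) \<le> m - (m1+m2)"
  shows "(\<lambda>j. if j \<in> {1..m - (m1+m2)} then \<tau> (j + m1) else j) \<in> Tk (m - (m1+m2))"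
proof -
  let ?k = "m - (m1+m2)"
  let ?r = "\<lambda>j. if j \<in> {1..m - (m1+m2)} then \<tau> (j + m1) else j"
  have perm: "\<tau> permutes {1..m}" using T unfolding Tk_def Ik_def by auto
  obtain t where t: "1 \<le> t" "t \<le> m" "\<tau> t = 1" and dec: "\<forall>i j. 1 \<le> i \<and> i < j \<and> j \<le> t \<longrightarrow> \<tau> i > \<tau> j"
    and inc: "\<forall>i j. t \<le> i \<and> i < j \<and> j \<le> m \<longrightarrow> \<tau> i < \<tau> j"
    using T unfolding Tk_def Ik_def by auto
  have inj: "inj \<tau>" using permutes_inj[OF perm] .
  have mid: "\<And>j. j \<in> {1..?k} \<Longrightarrow> 1 \<le> \<tau> (j+m1) \<and> \<tau> (j+m1) \<le> ?k"
  proof -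
    fix j assume j: "j \<in> {1..?k}"
    have j1: "1 \<le> j" "j \<le> ?k" using j by simp_all
    have c1: "1 \<le> m1+1" "m1+1 \<le> j+m1" "j+m1 \<le> m-m2" "m-m2 \<le> m" using j1 mm by linarith+
    have calc: "\<tau> (j+m1) \<le> max (\<tau> (m1+1)) (\<tau> (m-m2))"
      by (rule V_max[OF T c1])
    have u: "\<tau> (j+m1) \<le> ?k" using calc b1 b2 by (metis max.bounded_iff order_trans)
    have "j+m1 \<in> {1..m}" using j1 mm by simp
    then have "\<tau> (j+m1) \<in> {1..m}" using permutes_in_image[OF perm] by blast
    then show "1 \<le> \<tau> (j+m1) \<and> \<tau> (j+m1) \<le> ?k" using u by simp
  qed
  have img: "?r ` {1..?k} \<subseteq> {1..?k}"
  proof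
    fix y assume "y \<in> ?r ` {1..?k}"
    then obtain j where j: "j \<in> {1..?k}" "y = ?r j" by blast
    then have "y = \<tau> (j+m1)" by simp
    then show "y \<in> {1..?k}" using mid[OF j(1)] by simp
  qed
  have ij: "inj_on ?r {1..?k}"
  proof (rule inj_onI)
    fix x y assume "x \<in> {1..?k}" "y \<in> {1..?k}" "?r x = ?r y"
    then have "\<tau> (x+m1) = \<tau> (y+m1)" by simp
    then show "x = y" using inj by (simp add: inj_eq)
  qed
  have p: "?r permutes {1..?k}"
    by (rule endo_permutes[OF _ img ij]) auto
  have k1: "1 \<in> {1..?k}" using mm by simp
  have "1 \<in> ?r ` {1..?k}" unfolding permutes_image[OF p] by (rule k1)
  then obtain j0 where j0a: "1 = ?r j0" "j0 \<in> {1..?k}" by (rule imageE)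
  then have j0: "j0 \<in> {1..?k}" "\<tau> (j0 + m1) = 1" by simp_all
  have "\<tau> t = \<tau> (j0 + m1)" using j0 t by simp
  then have tj: "t = j0 + m1" using inj by (simp add: inj_eq)
  show ?thesis unfolding Tk_def Ik_def
  proof (intro CollectI conjI p bexI[of _ j0])
    show "j0 \<in> {1..?k}" by fact
    show "?r j0 = 1" using j0 by auto
    show "\<forall>i j. 1 \<le> i \<and> i < j \<and> j \<le> j0 \<longrightarrow> ?r j < ?r i"
    proof (intro allI impI)
      fix i j assume a: "1 \<le> i \<and> i < j \<and> j \<le> j0"
      have "1 \<le> i + m1 \<and> i + m1 < j + m1 \<and> j + m1 \<le> t" using a tj by linarith
      then have "\<tau> (j+m1) < \<tau> (i+m1)" using dec by blast
      then show "?r j < ?r i" using a j0 by auto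
    qed
    show "\<forall>i j. j0 \<le> i \<and> i < j \<and> j \<le> ?k \<longrightarrow> ?r i < ?r j"
    proof (intro allI impI)
      fix i j assume a: "j0 \<le> i \<and> i < j \<and> j \<le> ?k"
      have "t \<le> i + m1 \<and> i + m1 < j + m1 \<and> j + m1 \<le> m" using a tj mm by linarith
      then have "\<tau> (i+m1) < \<tau> (j+m1)" using inc by blast
      then show "?r i < ?r j" using a j0 by auto
    qed
  qed
qed

lemma Tk_perm: "\<sigma> \<in> Tk k \<Longrightarrow> \<sigma> permutes Ik k"
  by (simp add: Tk_def)

lemma half:
  assumes mm: "m1 + m2 < m"
    and sA: "\<forall>i\<in>{1..m1} \<union> {m - m2 + 1..m}. s i = A"
    and n1: "s' (m1+1) \<noteq> A" and n2: "s' (m - m2) \<noteq> A"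
    and H: "\<forall>\<sigma>\<in>Tk m. \<exists>\<sigma>'\<in>Tk m. seq_eq m (act \<sigma> s) (act \<sigma>' s')"
  shows "\<forall>\<sigma>\<in>Tk (m-(m1+m2)). \<exists>\<sigma>'\<in>Tk (m-(m1+m2)).
           seq_eq (m-(m1+m2)) (act \<sigma> (\<lambda>j. s (j+m1))) (act \<sigma>' (\<lambda>j. s' (j+m1)))"
proof
  let ?k = "m - (m1+m2)"
  fix \<sigma> assume s: "\<sigma> \<in> Tk ?k"
  let ?e = "extp m m1 m2 \<sigma>"
  have eT: "?e \<in> Tk m" by (rule extp_Tk[OF s mm])
  then obtain \<tau> where tT: "\<tau> \<in> Tk m" and eq: "seq_eq m (act ?e s) (act \<tau> s')" using H by blast
  have pe: "?e permutes Ik m" by (rule Tk_perm[OF eT])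
  have pt: "\<tau> permutes Ik m" by (rule Tk_perm[OF tT])
  have ps: "\<sigma> permutes Ik ?k" by (rule Tk_perm[OF s])
  have E: "\<forall>i\<in>Ik m. \<forall>j\<in>Ik m. ?e i = \<tau> j \<longrightarrow> s i = s' j"
    using eq seq_eq_act[OF pe pt] by blast
  have rng: "\<And>i. i \<in> Ik ?k \<Longrightarrow> \<sigma> i \<in> Ik ?k" using permutes_in_image[OF ps] by auto
  have big: "\<tau> j \<le> ?k" if j: "j \<in> Ik m" and nA: "s' j \<noteq> A" for j
  proof (rule ccontr)
    assume c: "\<not> \<tau> j \<le> ?k"
    have "\<tau> j \<in> Ik m" using j permutes_in_image[OF pt] by auto
    then have "\<tau> j \<in> ?e ` Ik m" using permutes_image[OF pe] by simp
    then obtain i where i0: "\<tau> j = ?e i" "i \<in> Ik m" by (rule imageE)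
    then have i: "i \<in> Ik m" "?e i = \<tau> j" by simp_all
    have "\<not> (m1 < i \<and> i \<le> m - m2)"
    proof
      assume a: "m1 < i \<and> i \<le> m - m2"
      have "i - m1 \<in> Ik ?k" using a mm by (auto simp: Ik_def)
      then have "\<sigma> (i - m1) \<le> ?k" using rng by (auto simp: Ik_def)
      moreover have "?e i = \<sigma> (i - m1)" using a by (auto simp: extp_def)
      ultimately show False using i c by simp
    qed
    then have "s i = A" using sA i by (auto simp: Ik_def)
    moreover have "s i = s' j" using E i j by blast
    ultimately show False using nA by simp
  qed
  have b1: "\<tau> (m1+1) \<le> ?k" by (rule big) (use mm n1 in \<open>auto simp: Ik_def\<close>)
  have b2: "\<tau> (m-m2) \<le> ?k" by (rule big) (use mm n2 in \<open>auto simp: Ik_def\<close>)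
  let ?r = "\<lambda>j. if j \<in> {1..m - (m1+m2)} then \<tau> (j + m1) else j"
  have rT: "?r \<in> Tk ?k" by (rule restr_Tk[OF tT mm b1 b2])
  have pr: "?r permutes Ik ?k" by (rule Tk_perm[OF rT])
  have "seq_eq ?k (act \<sigma> (\<lambda>j. s (j+m1))) (act ?r (\<lambda>j. s' (j+m1)))"
    unfolding seq_eq_act[OF ps pr]
  proof (intro ballI impI)
    fix i j assume i: "i \<in> Ik ?k" and j: "j \<in> Ik ?k" and e: "\<sigma> i = ?r j"
    have "?e (i+m1) = \<sigma> i" using i mm by (auto simp: extp_def Ik_def)
    then have "?e (i+m1) = \<tau> (j+m1)" using e j by (auto simp: Ik_def)
    moreover have "i+m1 \<in> Ik m" "j+m1 \<in> Ik m" using i j mm by (auto simp: Ik_def)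
    ultimately show "s (i+m1) = s' (j+m1)" using E by blast
  qed
  then show "\<exists>\<sigma>'\<in>Tk ?k. seq_eq ?k (act \<sigma> (\<lambda>j. s (j+m1))) (act \<sigma>' (\<lambda>j. s' (j+m1)))"
    using rT by blast
qed

theorem mainTheorem13:
  fixes s s' :: "nat \<Rightarrow> 'a" and m m1 m2 :: nat
  assumes "mirrored m s s'"
    and "coincidence m s s' m1 m2"
  shows "mirrored (m - (m1 + m2)) (\<lambda>j. s (j + m1)) (\<lambda>j. s' (j + m1))"
proof -
  let ?A = "s 1"
  have C: "m1 > 0 \<and> m1 + m2 < m \<and>
       (\<forall>i\<in>{1..m1} \<union> {m - m2 + 1..m}. s i = ?A \<and> s' i = ?A) \<and>
       s (m1 + 1) \<noteq> ?A \<and> s' (m1 + 1) \<noteq> ?A \<and> s (m - m2) \<noteq> ?A \<and> s' (m - m2) \<noteq> ?A"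
    using assms(2) unfolding coincidence_def Let_def .
  then have mm: "m1 + m2 < m" and A: "\<forall>i\<in>{1..m1} \<union> {m - m2 + 1..m}. s i = ?A \<and> s' i = ?A"
    and n1: "s (m1 + 1) \<noteq> ?A" and n2: "s' (m1 + 1) \<noteq> ?A"
    and n3: "s (m - m2) \<noteq> ?A" and n4: "s' (m - m2) \<noteq> ?A"
    by blast+
  have H1: "\<forall>\<sigma>\<in>Tk m. \<exists>\<sigma>'\<in>Tk m. seq_eq m (act \<sigma> s) (act \<sigma>' s')"
    using assms(1) unfolding mirrored_def by (rule conjunct1)
  have H2: "\<forall>\<tau>'\<in>Tk m. \<exists>\<tau>\<in>Tk m. seq_eq m (act \<tau>' s') (act \<tau> s)"
    using assms(1) unfolding mirrored_def by (rule conjunct2)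
  have sA: "\<forall>i\<in>{1..m1} \<union> {m - m2 + 1..m}. s i = ?A" using A by blast
  have sA': "\<forall>i\<in>{1..m1} \<union> {m - m2 + 1..m}. s' i = ?A" using A by blast
  note G1 = half[OF mm sA n2 n4 H1]
  note G2 = half[OF mm sA' n1 n3 H2]
  show ?thesis unfolding mirrored_def by (rule conjI[OF G1 G2])
qed

end
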